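(* Let $G$ be a group generated by $x_1,\dots,x_n$, with finite commutator subgroup $C=[G,G]$, such that $G/C$ is free abelian of rank $n$ with basis the images of $x_1,\dots,x_n$. Let $P=X\cap\mathcal C_G(C)$ with $X=\{g_{\mathbf m}\in T: c_{\,x_1^{m_1}\cdots x_{k-1}^{m_{k-1}},\,x_k}=e \text{ for all } k=1,\dots,n\}$, and $Q=P\cap Z$, where $Z$ is the center of $G$. Then for $q\in G$: $q\in Q$ if and only if $q\,t=t\,q=(q\,t)^{ab}$ for every $t\in T$.
   Context: Notation: $\bar g=g^{-1}$, $c_{gh}=\bar g\,\bar h\,g\,h$; $\mathcal C_G(C)$ is the centralizer of $C$ in $G$. For $\mathbf r\in\mathbb Z^n$, $g_{\mathbf r}=x_1^{r_1}\cdots x_n^{r_n}$, and $T=\{g_{\mathbf r}\}$. Every $g\in G$ decomposes uniquely as $g=g_{\mathbf r}c$ with $c\in C$, and $g^{ab}$ denotes $g_{\mathbf r}$. *)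

theory Defs
  imports "HOL-Algebra.Algebra"
begin

definition comm :: "('a, 'b) monoid_scheme \<Rightarrow> 'a \<Rightarrow> 'a \<Rightarrow> 'a" where
  "comm G g h = inv\<^bsub>G\<^esub> g \<otimes>\<^bsub>G\<^esub> inv\<^bsub>G\<^esub> h \<otimes>\<^bsub>G\<^esub> g \<otimes>\<^bsub>G\<^esub> h"

text \<open>gmon G x m k = x_1^{m_1} ... x_k^{m_k}; g_m = gmon G x m n.\<close>
fun gmon :: "('a, 'b) monoid_scheme \<Rightarrow> (nat \<Rightarrow> 'a) \<Rightarrow> (nat \<Rightarrow> int) \<Rightarrow> nat \<Rightarrow> 'a" where
  "gmon G x m 0 = \<one>\<^bsub>G\<^esub>"
| "gmon G x m (Suc k) = gmon G x m k \<otimes>\<^bsub>G\<^esub> (x (Suc k) [^]\<^bsub>G\<^esub> m (Suc k))"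

text \<open>Exponent vectors in Z^n: functions supported on {1..n}.\<close>
definition zvecs :: "nat \<Rightarrow> (nat \<Rightarrow> int) set" where
  "zvecs n = {r. \<forall>i. i \<notin> {1..n} \<longrightarrow> r i = 0}"

definition Tset :: "('a, 'b) monoid_scheme \<Rightarrow> (nat \<Rightarrow> 'a) \<Rightarrow> nat \<Rightarrow> 'a set" where
  "Tset G x n = {gmon G x r n | r. r \<in> zvecs n}"

definition center :: "('a, 'b) monoid_scheme \<Rightarrow> 'a set" where
  "center G = {z \<in> carrier G. \<forall>g \<in> carrier G. z \<otimes>\<^bsub>G\<^esub> g = g \<otimes>\<^bsub>G\<^esub> z}"

definition centralizer :: "('a, 'b) monoid_scheme \<Rightarrow> 'a set \<Rightarrow> 'a set" where
  "centralizer G S = {z \<in> carrier G. \<forall>s \<in> S. z \<otimes>\<^bsub>G\<^esub> s = s \<otimes>\<^bsub>G\<^esub> z}"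

definition abpart :: "('a, 'b) monoid_scheme \<Rightarrow> (nat \<Rightarrow> 'a) \<Rightarrow> nat \<Rightarrow> 'a \<Rightarrow> 'a" where
  "abpart G x n g = (THE t. t \<in> Tset G x n \<and> (\<exists>c \<in> derived G (carrier G). g = t \<otimes>\<^bsub>G\<^esub> c))"

definition Xset :: "('a, 'b) monoid_scheme \<Rightarrow> (nat \<Rightarrow> 'a) \<Rightarrow> nat \<Rightarrow> 'a set" where
  "Xset G x n = {gmon G x m n | m. m \<in> zvecs n \<and>
      (\<forall>k \<in> {1..n}. comm G (gmon G x m (k - 1)) (x k) = \<one>\<^bsub>G\<^esub>)}"

definition Pset :: "('a, 'b) monoid_scheme \<Rightarrow> (nat \<Rightarrow> 'a) \<Rightarrow> nat \<Rightarrow> 'a set" where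
  "Pset G x n = Xset G x n \<inter> centralizer G (derived G (carrier G))"

definition Qset :: "('a, 'b) monoid_scheme \<Rightarrow> (nat \<Rightarrow> 'a) \<Rightarrow> nat \<Rightarrow> 'a set" where
  "Qset G x n = Pset G x n \<inter> center G"

end

theory Submission
  imports Defs
begin

context group begin

lemma gmon_closed: "x ` {1..k} \<subseteq> carrier G \<Longrightarrow> gmon G x r k \<in> carrier G"
  by (induction k) (auto simp: image_subset_iff)

lemma gmon_cong: "(\<forall>j\<in>{1..k}. r j = s j) \<Longrightarrow> gmon G x r k = gmon G x s k"
  by (induction k) auto

lemma gmon_zero: "(\<forall>j\<in>{1..k}. r j = 0) \<Longrightarrow> gmon G x r k = \<one>"
  by (induction k) auto

lemma gmon_split:
  assumes "x ` {1..K} \<subseteq> carrier G" "j \<le> K"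
  shows "gmon G x r K = gmon G x r j \<otimes> gmon G x (\<lambda>i. if i \<le> j then 0 else r i) K"
  using assms
proof (induction K)
  case 0 then show ?case by (simp add: gmon_zero)
next
  case (Suc K)
  show ?case
  proof (cases "j = Suc K")
    case True
    have "gmon G x (\<lambda>i. if i \<le> j then 0 else r i) (Suc K) = \<one>"
      by (rule gmon_zero) (auto simp: True)
    moreover have "gmon G x r (Suc K) \<in> carrier G" using Suc.prems gmon_closed by blast
    ultimately show ?thesis using True by simp
  next
    case False
    then have jK: "j \<le> K" using Suc.prems by simp
    have cK: "x ` {1..K} \<subseteq> carrier G" using Suc.prems by auto
    have xc: "x (Suc K) \<in> carrier G" using Suc.prems by auto
    have ih: "gmon G x r K = gmon G x r j \<otimes> gmon G x (\<lambda>i. if i \<le> j then 0 else r i) K"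
      using Suc.IH cK jK by blast
    have "gmon G x r (Suc K) = (gmon G x r j \<otimes> gmon G x (\<lambda>i. if i \<le> j then 0 else r i) K) \<otimes> x (Suc K) [^] r (Suc K)"
      using ih by simp
    also have "\<dots> = gmon G x r j \<otimes> (gmon G x (\<lambda>i. if i \<le> j then 0 else r i) K \<otimes> x (Suc K) [^] r (Suc K))"
    proof -
      have "x ` {1..j} \<subseteq> carrier G" using cK jK by auto
      then have gj: "gmon G x r j \<in> carrier G" by (rule gmon_closed)
      have gK: "gmon G x (\<lambda>i. if i \<le> j then 0 else r i) K \<in> carrier G" using cK by (rule gmon_closed)
      show ?thesis using gj gK xc by (simp add: m_assoc)
    qed
    finally show ?thesis using jK by simp
  qed
qed

lemma comm_inv:
  assumes "a \<in> carrier G" "c \<in> carrier G" "c \<otimes> a = a \<otimes> c"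
  shows "a \<otimes> inv c = inv c \<otimes> a"
proof -
  have "a \<otimes> inv c = (inv c \<otimes> c) \<otimes> a \<otimes> inv c"
    using assms by (simp only: l_inv l_one)
  also have "\<dots> = inv c \<otimes> (c \<otimes> a) \<otimes> inv c"
    using assms by (simp only: m_assoc inv_closed m_closed)
  also have "\<dots> = inv c \<otimes> (a \<otimes> c) \<otimes> inv c"
    using assms(3) by simp
  also have "\<dots> = inv c \<otimes> a \<otimes> (c \<otimes> inv c)"
    using assms by (simp only: m_assoc inv_closed m_closed)
  also have "\<dots> = inv c \<otimes> a"
    using assms by simp
  finally show ?thesis .
qed

lemma comm_int_pow:
  assumes "a \<in> carrier G" "b \<in> carrier G" "a \<otimes> b = b \<otimes> a"
  shows "a \<otimes> b [^] (i::int) = b [^] i \<otimes> a"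
proof -
  have n: "b [^] (k::nat) \<otimes> a = a \<otimes> b [^] k" for k
    using group_commutes_pow[OF assms(3)[symmetric] assms(2) assms(1)] .
  show ?thesis
  proof (cases "i < 0")
    case True
    have "a \<otimes> inv (b [^] nat (-i)) = inv (b [^] nat (-i)) \<otimes> a"
      by (rule comm_inv) (use assms n in auto)
    then show ?thesis using True by (simp only: int_pow_def2 if_True)
  next
    case False
    then show ?thesis using n[of "nat i"] by (simp only: int_pow_def2 if_False)
  qed
qed

lemma comm_eq_one:
  assumes "a \<in> carrier G" "b \<in> carrier G"
  shows "comm G a b = \<one> \<longleftrightarrow> a \<otimes> b = b \<otimes> a"
proof -
  have "comm G a b = inv (b \<otimes> a) \<otimes> (a \<otimes> b)"
  proof -
    have "comm G a b = inv (b \<otimes> a) \<otimes> a \<otimes> b"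
      using assms by (simp add: comm_def inv_mult_group)
    also have "\<dots> = inv (b \<otimes> a) \<otimes> (a \<otimes> b)"
      using assms by (intro m_assoc) auto
    finally show ?thesis .
  qed
    have "inv (b \<otimes> a) \<otimes> (a \<otimes> b) = \<one> \<longleftrightarrow> a \<otimes> b = b \<otimes> a"
    proof
      assume h: "inv (b \<otimes> a) \<otimes> (a \<otimes> b) = \<one>"
      have "inv (a \<otimes> b) = inv (b \<otimes> a)" using assms by (intro inv_equality[OF h]) auto
      then show "a \<otimes> b = b \<otimes> a" using assms by (metis inv_inv m_closed)
    next
      assume e: "a \<otimes> b = b \<otimes> a" show "inv (b \<otimes> a) \<otimes> (a \<otimes> b) = \<one>" unfolding e using assms by (intro l_inv) auto
    qed
    then show ?thesis using \<open>comm G a b = _\<close> by simp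
qed

lemma gmon_add_comm:
  assumes "x ` {1..k} \<subseteq> carrier G"
    and "\<forall>j\<in>{1..k}. gmon G x m (j - 1) \<otimes> x j = x j \<otimes> gmon G x m (j - 1)"
  shows "gmon G x r k \<otimes> gmon G x m k = gmon G x (\<lambda>i. r i + m i) k"
  using assms
proof (induction k)
  case 0 then show ?case by simp
next
  case (Suc k)
  have cK: "x ` {1..k} \<subseteq> carrier G" using Suc.prems by auto
  have xc: "x (Suc k) \<in> carrier G" using Suc.prems by auto
  have ih: "gmon G x r k \<otimes> gmon G x m k = gmon G x (\<lambda>i. r i + m i) k"
    using Suc cK by auto
  have cm: "gmon G x m k \<otimes> x (Suc k) = x (Suc k) \<otimes> gmon G x m k"
    using Suc.prems(2) by force
  have A: "gmon G x m k \<in> carrier G" "gmon G x r k \<in> carrier G" using gmon_closed cK by auto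
  have cm2: "gmon G x m k \<otimes> x (Suc k) [^] r (Suc k) = x (Suc k) [^] r (Suc k) \<otimes> gmon G x m k"
    using comm_int_pow[OF A(1) xc cm] .
  have "gmon G x r (Suc k) \<otimes> gmon G x m (Suc k) =
     gmon G x r k \<otimes> (x (Suc k) [^] r (Suc k) \<otimes> gmon G x m k) \<otimes> x (Suc k) [^] m (Suc k)"
    using A xc by (simp add: m_assoc)
  also have "\<dots> = (gmon G x r k \<otimes> gmon G x m k) \<otimes> (x (Suc k) [^] r (Suc k) \<otimes> x (Suc k) [^] m (Suc k))"
    using A xc by (simp add: cm2[symmetric] m_assoc)
  also have "\<dots> = gmon G x (\<lambda>i. r i + m i) (Suc k)"
    using ih xc by (simp add: int_pow_mult)
  finally show ?case .
qed


lemma gmon_quot_add: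
  assumes "x ` {1..k} \<subseteq> carrier G"
  shows "(derived G (carrier G) #> gmon G x r k) \<otimes>\<^bsub>G Mod derived G (carrier G)\<^esub> (derived G (carrier G) #> gmon G x m k)
       = derived G (carrier G) #> gmon G x (\<lambda>i. r i + m i) k"
  using assms
proof (induction k)
  case 0
  interpret N: normal "derived G (carrier G)" G by (rule derived_self_is_normal)
  have "(\<lambda>a. derived G (carrier G) #> a) \<in> hom G (G Mod derived G (carrier G))"
    by (rule N.r_coset_hom_Mod)
  then have "derived G (carrier G) #> (\<one> \<otimes> \<one>) = (derived G (carrier G) #> \<one>) \<otimes>\<^bsub>G Mod derived G (carrier G)\<^esub> (derived G (carrier G) #> \<one>)"
    by (rule hom_mult) auto
  then show ?case by simp
next
  case (Suc k)
  let ?C = "derived G (carrier G)"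
  let ?Q = "G Mod ?C"
  let ?h = "\<lambda>a. ?C #> a"
  interpret N: normal ?C G by (rule derived_self_is_normal)
  interpret Q: comm_group ?Q by (rule derived_quot_is_comm_group)
  have hom: "?h \<in> hom G ?Q" by (rule N.r_coset_hom_Mod)
  have cK: "x ` {1..k} \<subseteq> carrier G" using Suc.prems by auto
  have xc: "x (Suc k) \<in> carrier G" using Suc.prems by auto
  have ih: "?h (gmon G x r k) \<otimes>\<^bsub>?Q\<^esub> ?h (gmon G x m k) = ?h (gmon G x (\<lambda>i. r i + m i) k)"
    using Suc cK by auto
  have A: "gmon G x m k \<in> carrier G" "gmon G x r k \<in> carrier G" "gmon G x (\<lambda>i. r i + m i) k \<in> carrier G"
    using gmon_closed cK by auto
  have B: "x (Suc k) [^] r (Suc k) \<in> carrier G" "x (Suc k) [^] m (Suc k) \<in> carrier G" using xc by auto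
  have hc: "?h a \<in> carrier ?Q" if "a \<in> carrier G" for a using hom that by (rule hom_in_carrier)
  have hm: "?h (a \<otimes> b) = ?h a \<otimes>\<^bsub>?Q\<^esub> ?h b" if "a \<in> carrier G" "b \<in> carrier G" for a b
    using hom that by (rule hom_mult)
  have swap4: "(a \<otimes>\<^bsub>?Q\<^esub> b) \<otimes>\<^bsub>?Q\<^esub> (c \<otimes>\<^bsub>?Q\<^esub> d) = (a \<otimes>\<^bsub>?Q\<^esub> c) \<otimes>\<^bsub>?Q\<^esub> (b \<otimes>\<^bsub>?Q\<^esub> d)"
    if "a \<in> carrier ?Q" "b \<in> carrier ?Q" "c \<in> carrier ?Q" "d \<in> carrier ?Q" for a b c d
  proof -
    have "(a \<otimes>\<^bsub>?Q\<^esub> b) \<otimes>\<^bsub>?Q\<^esub> (c \<otimes>\<^bsub>?Q\<^esub> d) = a \<otimes>\<^bsub>?Q\<^esub> (b \<otimes>\<^bsub>?Q\<^esub> (c \<otimes>\<^bsub>?Q\<^esub> d))"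
      using that by (intro Q.m_assoc Q.m_closed)
    also have "\<dots> = a \<otimes>\<^bsub>?Q\<^esub> (c \<otimes>\<^bsub>?Q\<^esub> (b \<otimes>\<^bsub>?Q\<^esub> d))"
      using that Q.m_lcomm by metis
    also have "\<dots> = (a \<otimes>\<^bsub>?Q\<^esub> c) \<otimes>\<^bsub>?Q\<^esub> (b \<otimes>\<^bsub>?Q\<^esub> d)"
      using that by (intro Q.m_assoc[symmetric] Q.m_closed)
    finally show ?thesis .
  qed
  have "?h (gmon G x r (Suc k)) \<otimes>\<^bsub>?Q\<^esub> ?h (gmon G x m (Suc k)) =
    (?h (gmon G x r k) \<otimes>\<^bsub>?Q\<^esub> ?h (x (Suc k) [^] r (Suc k))) \<otimes>\<^bsub>?Q\<^esub>
    (?h (gmon G x m k) \<otimes>\<^bsub>?Q\<^esub> ?h (x (Suc k) [^] m (Suc k)))"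
    using A B by (simp add: hm)
  also have "\<dots> = (?h (gmon G x r k) \<otimes>\<^bsub>?Q\<^esub> ?h (gmon G x m k)) \<otimes>\<^bsub>?Q\<^esub>
    (?h (x (Suc k) [^] r (Suc k)) \<otimes>\<^bsub>?Q\<^esub> ?h (x (Suc k) [^] m (Suc k)))"
    using A B hc by (intro swap4) auto
  also have "\<dots> = ?h (gmon G x (\<lambda>i. r i + m i) k) \<otimes>\<^bsub>?Q\<^esub> ?h (x (Suc k) [^] r (Suc k) \<otimes> x (Suc k) [^] m (Suc k))"
    using ih A B by (simp add: hm)
  also have "\<dots> = ?h (gmon G x (\<lambda>i. r i + m i) (Suc k))"
    using A B xc by (simp add: hm int_pow_mult)
  finally show ?case .
qed

lemma T_decomp:
  assumes "x ` {1..n} \<subseteq> carrier G"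
    and bij: "bij_betw (\<lambda>r. derived G (carrier G) #> gmon G x r n) (zvecs n)
           (carrier (G Mod derived G (carrier G)))"
    and g: "g \<in> carrier G"
  shows "\<exists>t\<in>Tset G x n. \<exists>c\<in>derived G (carrier G). g = t \<otimes> c"
proof -
  let ?C = "derived G (carrier G)"
  interpret N: normal ?C G by (rule derived_self_is_normal)
  have "?C #> g \<in> carrier (G Mod ?C)" using g by (simp add: carrier_FactGroup)
  then have "?C #> g \<in> (\<lambda>r. ?C #> gmon G x r n) ` zvecs n"
    using bij_betw_imp_surj_on[OF bij] by simp
  then obtain r where r: "r \<in> zvecs n" "?C #> gmon G x r n = ?C #> g"
    by (auto simp del: mult_FactGroup)
  have gr: "gmon G x r n \<in> carrier G" using assms gmon_closed by blast
  have "g \<in> ?C #> g" using g N.subgroup_axioms by (rule rcos_self)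
  then have "g \<in> ?C #> gmon G x r n" using r by simp
  then obtain c where c: "c \<in> ?C" "g = c \<otimes> gmon G x r n" unfolding r_coset_def by blast
  have cc: "c \<in> carrier G" using c N.subset by blast
  have "inv (gmon G x r n) \<otimes> c \<otimes> gmon G x r n \<in> ?C" using gr c(1) by (rule N.inv_op_closed1)
  moreover have "g = gmon G x r n \<otimes> (inv (gmon G x r n) \<otimes> c \<otimes> gmon G x r n)"
  proof -
    have "gmon G x r n \<otimes> (inv (gmon G x r n) \<otimes> c \<otimes> gmon G x r n)
        = (gmon G x r n \<otimes> inv (gmon G x r n)) \<otimes> c \<otimes> gmon G x r n"
      using gr cc by (simp only: m_assoc m_closed inv_closed)
    then show ?thesis using gr cc c by simp
  qed
  moreover have "gmon G x r n \<in> Tset G x n" using r unfolding Tset_def by blast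
  ultimately show ?thesis by blast
qed

lemma T_unique:
  assumes "x ` {1..n} \<subseteq> carrier G"
    and bij: "bij_betw (\<lambda>r. derived G (carrier G) #> gmon G x r n) (zvecs n)
           (carrier (G Mod derived G (carrier G)))"
    and t: "t \<in> Tset G x n" and t': "t' \<in> Tset G x n"
    and c: "c \<in> derived G (carrier G)" and c': "c' \<in> derived G (carrier G)"
    and e: "t \<otimes> c = t' \<otimes> c'"
  shows "t = t'"
proof -
  let ?C = "derived G (carrier G)"
  interpret N: normal ?C G by (rule derived_self_is_normal)
  obtain r where r: "r \<in> zvecs n" "t = gmon G x r n" using t unfolding Tset_def by blast
  obtain r' where r': "r' \<in> zvecs n" "t' = gmon G x r' n" using t' unfolding Tset_def by blast
  have tc: "t \<in> carrier G" "t' \<in> carrier G" using r r' assms(1) gmon_closed by auto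
  have cc: "c \<in> carrier G" "c' \<in> carrier G" using c c' N.subset by auto
  have "t \<otimes> c \<otimes> inv c' = t' \<otimes> c' \<otimes> inv c'" using e by simp
  also have "\<dots> = t' \<otimes> (c' \<otimes> inv c')" using tc cc by (simp only: m_assoc inv_closed)
  also have "\<dots> = t'" using tc cc by simp
  finally have tt: "t' = t \<otimes> c \<otimes> inv c'" by simp
  have "t' \<otimes> inv t = t \<otimes> (c \<otimes> inv c') \<otimes> inv t"
    unfolding tt using tc cc by (simp only: m_assoc inv_closed m_closed)
  moreover have "t \<otimes> (c \<otimes> inv c') \<otimes> inv t \<in> ?C"
    using tc c c' by (intro N.inv_op_closed2) (auto intro: N.m_closed N.m_inv_closed)
  ultimately have "t' \<in> ?C #> t"
    using N.rcos_module[OF is_group tc(1) tc(2)] by simp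
  then have "?C #> t = ?C #> t'" using tc N.subgroup_axioms by (intro repr_independence) auto
  then have "r = r'" using bij_betw_imp_inj_on[OF bij] r r' by (auto dest: inj_onD)
  then show ?thesis using r r' by simp
qed

lemma abpart_eq:
  assumes "x ` {1..n} \<subseteq> carrier G"
    and bij: "bij_betw (\<lambda>r. derived G (carrier G) #> gmon G x r n) (zvecs n)
           (carrier (G Mod derived G (carrier G)))"
    and t: "t \<in> Tset G x n" and c: "c \<in> derived G (carrier G)" and g: "g = t \<otimes> c"
  shows "abpart G x n g = t"
  unfolding abpart_def
proof (rule the_equality)
  show "t \<in> Tset G x n \<and> (\<exists>c\<in>derived G (carrier G). g = t \<otimes> c)" using t c g by blast
next
  fix t' assume "t' \<in> Tset G x n \<and> (\<exists>c\<in>derived G (carrier G). g = t' \<otimes> c)"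
  then obtain c' where "t' \<in> Tset G x n" "c' \<in> derived G (carrier G)" "g = t' \<otimes> c'" by blast
  then show "t' = t" using T_unique[OF assms(1) bij _ t _ c] g by metis
qed

lemma abpart_in:
  assumes "x ` {1..n} \<subseteq> carrier G"
    and bij: "bij_betw (\<lambda>r. derived G (carrier G) #> gmon G x r n) (zvecs n)
           (carrier (G Mod derived G (carrier G)))"
    and g: "g \<in> carrier G"
  shows "abpart G x n g \<in> Tset G x n"
  using T_decomp[OF assms] abpart_eq[OF assms(1) bij] by metis


lemma comm_generate:
  assumes "q \<in> carrier G" "H \<subseteq> carrier G" "\<forall>h\<in>H. q \<otimes> h = h \<otimes> q"
    and "g \<in> generate G H"
  shows "q \<otimes> g = g \<otimes> q"
  using assms(4)
proof (induction g rule: generate.induct)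
  case one then show ?case using assms by simp
next
  case (incl h) then show ?case using assms by blast
next
  case (inv h)
  then have "h \<in> carrier G" "h \<otimes> q = q \<otimes> h" using assms by auto
  then show ?case using comm_inv[OF assms(1)] by auto
next
  case (eng h1 h2)
  have c: "h1 \<in> carrier G" "h2 \<in> carrier G"
    using eng.hyps generate_in_carrier assms(2) by auto
  have "q \<otimes> (h1 \<otimes> h2) = (q \<otimes> h1) \<otimes> h2" using c assms(1) by (simp only: m_assoc)
  also have "\<dots> = h1 \<otimes> (q \<otimes> h2)" using c assms(1) eng.IH by (simp only: m_assoc)
  also have "\<dots> = (h1 \<otimes> h2) \<otimes> q" using c assms(1) eng.IH by (simp only: m_assoc)
  finally show ?case .
qed

lemma gmon_unit:
  assumes "x ` {1..n} \<subseteq> carrier G" "k \<in> {1..n}"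
  shows "gmon G x (\<lambda>i. if i = k then 1 else 0) n = x k"
proof -
  have kn: "k \<le> n" using assms by auto
  have z: "gmon G x (\<lambda>i. if i \<le> k then 0 else (\<lambda>i. if i = k then 1 else 0) i) n = \<one>"
    by (rule gmon_zero) auto
  obtain k' where k': "k = Suc k'" using assms by (cases k) auto
  have z2: "gmon G x (\<lambda>i. if i = k then 1 else 0) k' = \<one>"
    by (rule gmon_zero) (auto simp: k')
  have xk: "x k \<in> carrier G" using assms by auto
  have "gmon G x (\<lambda>i. if i = k then 1 else (0::int)) n = gmon G x (\<lambda>i. if i = k then 1 else 0) k \<otimes> \<one>"
    using gmon_split[OF assms(1) kn, of "\<lambda>i. if i = k then 1 else 0"] z by simp
  also have "\<dots> = x k" using z2 xk by (simp add: k')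
  finally show ?thesis .
qed

end

theorem proposition6:
  fixes G (structure) and x :: "nat \<Rightarrow> 'a" and n :: nat and q :: 'a
  assumes "group G"
    and "x ` {1..n} \<subseteq> carrier G"
    and "generate G (x ` {1..n}) = carrier G"
    and "finite (derived G (carrier G))"
    and "bij_betw (\<lambda>r. derived G (carrier G) #> gmon G x r n) (zvecs n)
           (carrier (G Mod derived G (carrier G)))"
    and "q \<in> carrier G"
  shows "q \<in> Qset G x n \<longleftrightarrow>
    (\<forall>t \<in> Tset G x n. q \<otimes> t = t \<otimes> q \<and> t \<otimes> q = abpart G x n (q \<otimes> t))"
proof -
  interpret group G by fact
  let ?C = "derived G (carrier G)"
  let ?T = "Tset G x n"
  let ?Q = "G Mod ?C"
  note xc = assms(2)
  note bij = assms(5)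
  note qc = assms(6)
  interpret N: normal ?C G by (rule derived_self_is_normal)
  have hom: "(\<lambda>a. ?C #> a) \<in> hom G ?Q" by (rule N.r_coset_hom_Mod)
  have Tc: "t \<in> carrier G" if "t \<in> ?T" for t
    using that gmon_closed[OF xc] unfolding Tset_def by blast
  have ek: "(\<lambda>i. if i = k then 1 else 0) \<in> zvecs n" if "k \<in> {1..n}" for k
    using that unfolding zvecs_def by auto
  have xT: "x k \<in> ?T" if "k \<in> {1..n}" for k
    using gmon_unit[OF xc that] ek[OF that] unfolding Tset_def by force
  have addz: "(\<lambda>i. r i + m i) \<in> zvecs n" if "r \<in> zvecs n" "m \<in> zvecs n" for r m
    using that unfolding zvecs_def by auto
  have oneT: "\<one> \<in> ?T"
  proof -
    have "gmon G x (\<lambda>_. 0) n = \<one>" by (rule gmon_zero) auto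
    moreover have "(\<lambda>_. 0) \<in> zvecs n" unfolding zvecs_def by auto
    ultimately show ?thesis unfolding Tset_def by force
  qed
  have add_quot: "s = (\<lambda>i. r i + m i)"
    if "r \<in> zvecs n" "m \<in> zvecs n" "s \<in> zvecs n" "gmon G x r n \<otimes> gmon G x m n = gmon G x s n" for r m s
  proof -
    have "?C #> gmon G x s n = (?C #> gmon G x r n) \<otimes>\<^bsub>?Q\<^esub> (?C #> gmon G x m n)"
      unfolding that(4)[symmetric] using hom gmon_closed[OF xc] by (intro hom_mult) auto
    also have "\<dots> = ?C #> gmon G x (\<lambda>i. r i + m i) n" by (rule gmon_quot_add[OF xc])
    finally show ?thesis using bij_betw_imp_inj_on[OF bij] that addz by (auto dest: inj_onD)
  qed
  show ?thesis
  proof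
    assume qQ: "q \<in> Qset G x n"
    then have qX: "q \<in> Xset G x n" and qZ: "q \<in> center G"
      unfolding Qset_def Pset_def by auto
    then obtain m where m: "m \<in> zvecs n" "q = gmon G x m n"
      and cm: "\<forall>k\<in>{1..n}. comm G (gmon G x m (k - 1)) (x k) = \<one>"
      unfolding Xset_def by blast
    have cm': "\<forall>j\<in>{1..n}. gmon G x m (j - 1) \<otimes> x j = x j \<otimes> gmon G x m (j - 1)"
    proof
      fix j assume j: "j \<in> {1..n}"
      have "{1..j-1} \<subseteq> {1..n}" using j by auto
      then have "x ` {1..j-1} \<subseteq> carrier G" using xc by blast
      then have "gmon G x m (j - 1) \<in> carrier G" by (rule gmon_closed)
      moreover have "x j \<in> carrier G" using xc j by auto
      ultimately show "gmon G x m (j - 1) \<otimes> x j = x j \<otimes> gmon G x m (j - 1)"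
        using cm j comm_eq_one by blast
    qed
    show "\<forall>t \<in> ?T. q \<otimes> t = t \<otimes> q \<and> t \<otimes> q = abpart G x n (q \<otimes> t)"
    proof
      fix t assume t: "t \<in> ?T"
      then obtain r where r: "r \<in> zvecs n" "t = gmon G x r n" unfolding Tset_def by blast
      have qt: "q \<otimes> t = t \<otimes> q" using qZ Tc[OF t] unfolding center_def by auto
      have "t \<otimes> q = gmon G x (\<lambda>i. r i + m i) n"
        using gmon_add_comm[OF xc cm'] r m by simp
      then have tqT: "t \<otimes> q \<in> ?T" using addz[OF r(1) m(1)] unfolding Tset_def by blast
      have "abpart G x n (t \<otimes> q) = t \<otimes> q"
        using abpart_eq[OF xc bij tqT N.one_closed] tqT Tc by simp
      then show "q \<otimes> t = t \<otimes> q \<and> t \<otimes> q = abpart G x n (q \<otimes> t)" using qt by simp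
    qed
  next
    assume H: "\<forall>t \<in> ?T. q \<otimes> t = t \<otimes> q \<and> t \<otimes> q = abpart G x n (q \<otimes> t)"
    have "q = abpart G x n q" using H oneT qc by force
    then have qT: "q \<in> ?T" using abpart_in[OF xc bij qc] by simp
    then obtain m where m: "m \<in> zvecs n" "q = gmon G x m n" unfolding Tset_def by blast
    have qx: "\<forall>h\<in>x ` {1..n}. q \<otimes> h = h \<otimes> q" using H xT by blast
    have qZ: "q \<in> center G"
      unfolding center_def using comm_generate[OF qc xc qx] assms(3) qc by auto
    then have qCent: "q \<in> centralizer G ?C"
      unfolding center_def centralizer_def using N.subset by auto
    have "comm G (gmon G x m (k - 1)) (x k) = \<one>" if k: "k \<in> {1..n}" for k
    proof -
      define e where "e = (\<lambda>i. if i = k then 1 else (0::int))"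
      have xkc: "x k \<in> carrier G" using xc k by auto
      have "x k \<otimes> q = abpart G x n (q \<otimes> x k)" using H xT[OF k] by blast
      then have "x k \<otimes> q \<in> ?T" using abpart_in[OF xc bij] qc xkc by simp
      then obtain s where s: "s \<in> zvecs n" "x k \<otimes> q = gmon G x s n" unfolding Tset_def by blast
      have "s = (\<lambda>i. e i + m i)"
        using add_quot[OF ek[OF k] m(1) s(1)] s(2) m(2) gmon_unit[OF xc k] unfolding e_def by simp
      then have eq1: "x k \<otimes> gmon G x m n = gmon G x (\<lambda>i. e i + m i) n" using s m by simp
      have kn: "k \<le> n" using k by auto
      obtain k' where k': "k = Suc k'" using k by (cases k) auto
      have "{1..k'} \<subseteq> {1..n}" using kn k' by auto
      then have ck': "x ` {1..k'} \<subseteq> carrier G" using xc by blast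
      define R where "R = gmon G x (\<lambda>i. if i \<le> k then 0 else m i) n"
      have Rc: "R \<in> carrier G" unfolding R_def using xc by (rule gmon_closed)
      have R': "gmon G x (\<lambda>i. if i \<le> k then 0 else e i + m i) n = R"
        unfolding R_def by (rule gmon_cong) (auto simp: e_def)
      define a where "a = gmon G x m k'"
      have ac: "a \<in> carrier G" unfolding a_def using ck' by (rule gmon_closed)
      have a': "gmon G x (\<lambda>i. e i + m i) k' = a"
        unfolding a_def by (rule gmon_cong) (auto simp: e_def k')
      define p where "p = x k [^] m k"
      have pc: "p \<in> carrier G" unfolding p_def using xkc by simp
      have s1: "gmon G x m n = a \<otimes> p \<otimes> R"
        using gmon_split[OF xc kn, of m] unfolding R_def a_def p_def by (simp add: k')
      have s2: "gmon G x (\<lambda>i. e i + m i) n = a \<otimes> (x k \<otimes> p) \<otimes> R"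
      proof -
        have "gmon G x (\<lambda>i. e i + m i) n = gmon G x (\<lambda>i. e i + m i) k' \<otimes> x k [^] (1 + m k) \<otimes> R"
          using gmon_split[OF xc kn, of "\<lambda>i. e i + m i"] R' by (simp add: k' e_def)
        also have "x k [^] (1 + m k) = x k \<otimes> p" unfolding p_def using xkc by (simp add: int_pow_mult)
        finally show ?thesis using a' by simp
      qed
      have "(x k \<otimes> a) \<otimes> (p \<otimes> R) = x k \<otimes> (a \<otimes> p \<otimes> R)"
        using xkc ac pc Rc by (simp only: m_assoc m_closed)
      also have "\<dots> = a \<otimes> (x k \<otimes> p) \<otimes> R" using eq1 s1 s2 by simp
      also have "\<dots> = (a \<otimes> x k) \<otimes> (p \<otimes> R)"
        using xkc ac pc Rc by (simp only: m_assoc m_closed)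
      finally have "x k \<otimes> a = a \<otimes> x k"
        using xkc ac pc Rc by (simp only: right_cancel m_closed)
      then show ?thesis using comm_eq_one[OF ac xkc] k' unfolding a_def by simp
    qed
    then have "q \<in> Xset G x n" unfolding Xset_def using m by blast
    then show "q \<in> Qset G x n" unfolding Qset_def Pset_def using qZ qCent by blast
  qed
qed

end
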